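(* Suppose $S$ and $T$ are identically zero on $\Omega$. Then for any $(x_0,y_0,z_0,\lambda_0)\in\Omega$ there exist an open set $W\subset\mathbb{R}^3$, an open interval $I\subset\mathbb{R}$ with $(x_0,y_0,z_0,\lambda_0)\in W\times I\subset\Omega$, and seven smooth functions $\hat a^0,\hat a^1,\hat a^2,\hat b^0,\hat b^1,\hat c^0,\hat c^1:W\to\mathbb{R}$ such that $\hat c^0+\hat c^1\lambda$ does not vanish on $W\times I$, $\hat c^1\hat b^0-\hat b^1\hat c^0$ does not vanish on $W$, and for $(x,y,z,\lambda)\in W\times I$ and $\dot x,\dot z\in\mathbb{R}$, the equation $\dot z=h(x,y,z,\lambda)+g(x,y,z,\lambda)\dot x$ is equivalent to $$\lambda\big(\hat b^1\dot x+\hat a^2\lambda-\hat c^1\dot z\big)+\big(\hat b^0\dot x+\hat a^1\lambda-\hat c^0\dot z\big)+\hat a^0=0,$$ where all of $\hat a^0,\dots,\hat c^1$ are evaluated at $(x,y,z)$.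
   Context: $\Omega\subset\mathbb{R}^4$ is open connected and $g,h:\Omega\to\mathbb{R}$ are real analytic functions of $(x,y,z,\lambda)$ such that $g_4=\partial g/\partial\lambda$ does not vanish on $\Omega$ and $G(x,y,z,\lambda)=(x,y,z,g(x,y,z,\lambda))$ is a diffeomorphism from $\Omega$ onto $G(\Omega)$. Numeric subscripts denote partial derivatives with respect to the corresponding argument. $S=2g_4g_{4,4,4}-3g_{4,4}^2$ and $T=2g_4h_{4,4,4}-3g_{4,4}h_{4,4}$. *)

theory Defs
  imports "HOL-Analysis.Analysis"
begin

type_synonym R3 = "real \<times> real \<times> real"
type_synonym R4 = "real \<times> real \<times> real \<times> real"

fun Ck_on :: "nat \<Rightarrow> 'a::euclidean_space set \<Rightarrow> ('a \<Rightarrow> 'b::real_normed_vector) \<Rightarrow> bool" where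
  "Ck_on 0 S f = continuous_on S f"
| "Ck_on (Suc k) S f =
     (\<exists>f'. (\<forall>x\<in>S. (f has_derivative f' x) (at x)) \<and> (\<forall>v. Ck_on k S (\<lambda>x. f' x v)))"

definition smooth_on :: "'a::euclidean_space set \<Rightarrow> ('a \<Rightarrow> 'b::real_normed_vector) \<Rightarrow> bool" where
  "smooth_on S f \<longleftrightarrow> (\<forall>k. Ck_on k S f)"

definition diffeo_onto_image :: "'a::euclidean_space set \<Rightarrow> ('a \<Rightarrow> 'a) \<Rightarrow> bool" where
  "diffeo_onto_image U f \<longleftrightarrow> open U \<and> open (f ` U) \<and> inj_on f U \<and> smooth_on U f
     \<and> smooth_on (f ` U) (the_inv_into U f)"

text \<open>Real analytic on U \<subseteq> R^4: locally the sum of an (unconditionally, i.e. absolutely)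
convergent power series in four variables.\<close>
definition real_analytic_on4 :: "R4 set \<Rightarrow> (R4 \<Rightarrow> real) \<Rightarrow> bool" where
  "real_analytic_on4 U f \<longleftrightarrow>
    (\<forall>p\<in>U. \<exists>r>0. \<exists>c :: nat \<Rightarrow> nat \<Rightarrow> nat \<Rightarrow> nat \<Rightarrow> real.
       \<forall>q\<in>ball p r.
         ((\<lambda>(i,j,k,l). c i j k l * (fst q - fst p) ^ i * (fst (snd q) - fst (snd p)) ^ j
              * (fst (snd (snd q)) - fst (snd (snd p))) ^ k
              * (snd (snd (snd q)) - snd (snd (snd p))) ^ l)
           has_sum f q) UNIV)"

definition d4 :: "(R4 \<Rightarrow> real) \<Rightarrow> R4 \<Rightarrow> real" where
  "d4 f = (\<lambda>(x,y,z,l). deriv (\<lambda>t. f (x,y,z,t)) l)"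

end

theory Submission
  imports Defs
begin

lemma deriv0_const:
  fixes F :: "real \<Rightarrow> real"
  assumes I: "is_interval I" and d: "\<And>t. t \<in> I \<Longrightarrow> (F has_real_derivative 0) (at t)"
    and "t \<in> I" "s \<in> I"
  shows "F t = F s"
proof -
  have "convex I" using I by (simp add: is_interval_convex_1)
  then obtain c where "\<forall>x\<in>I. F x = c"
    using has_field_derivative_zero_constant[of I F] d by (meson has_field_derivative_at_within)
  then show ?thesis using assms by auto
qed

lemma deriv_const_lin:
  fixes F :: "real \<Rightarrow> real"
  assumes I: "is_interval I" and d: "\<And>t. t \<in> I \<Longrightarrow> (F has_real_derivative c) (at t)"
    and "t \<in> I" "t0 \<in> I"
  shows "F t = F t0 + c * (t - t0)"
proof -
  have "(\<lambda>t. F t - c * t) t = (\<lambda>t. F t - c * t) t0"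
    apply (rule deriv0_const[OF I _ assms(3,4)])
    using d by (auto intro!: derivative_eq_intros)
  then show ?thesis by (simp add: algebra_simps)
qed

lemma deriv_quad:
  fixes F F1 :: "real \<Rightarrow> real"
  assumes I: "is_interval I" and d: "\<And>t. t \<in> I \<Longrightarrow> (F has_real_derivative F1 t) (at t)"
    and d1: "\<And>t. t \<in> I \<Longrightarrow> (F1 has_real_derivative c) (at t)"
    and "t \<in> I" "t0 \<in> I"
  shows "F t = F t0 + F1 t0 * (t - t0) + c / 2 * (t - t0)^2"
proof -
  have l: "F1 s = F1 t0 + c * (s - t0)" if "s \<in> I" for s
    using deriv_const_lin[OF I d1 that assms(5)] .
  have "(\<lambda>t. F t - F1 t0 * t - c / 2 * (t - t0)^2) t = (\<lambda>t. F t - F1 t0 * t - c / 2 * (t - t0)^2) t0"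
    apply (rule deriv0_const[OF I _ assms(4,5)])
    subgoal for s
    proof -
      assume s: "s \<in> I"
      have "((\<lambda>t. F t - F1 t0 * t - c / 2 * (t - t0)^2) has_real_derivative F1 s - F1 t0 - c * (s - t0)) (at s)"
        using d[OF s] by (auto intro!: derivative_eq_intros simp: field_simps)
      then show ?thesis using l[OF s] by simp
    qed
    done
  then show ?thesis by (simp add: algebra_simps power2_eq_square)
qed

lemma core:
  fixes p0 p1 p2 p3 e0 e1 e2 e3 :: "real \<Rightarrow> real"
  assumes I: "is_interval I" and t0: "t0 \<in> I"
    and dp0: "\<And>t. t \<in> I \<Longrightarrow> (p0 has_real_derivative p1 t) (at t)"
    and dp1: "\<And>t. t \<in> I \<Longrightarrow> (p1 has_real_derivative p2 t) (at t)"
    and dp2: "\<And>t. t \<in> I \<Longrightarrow> (p2 has_real_derivative p3 t) (at t)"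
    and de0: "\<And>t. t \<in> I \<Longrightarrow> (e0 has_real_derivative e1 t) (at t)"
    and de1: "\<And>t. t \<in> I \<Longrightarrow> (e1 has_real_derivative e2 t) (at t)"
    and de2: "\<And>t. t \<in> I \<Longrightarrow> (e2 has_real_derivative e3 t) (at t)"
    and nz: "\<And>t. t \<in> I \<Longrightarrow> p1 t \<noteq> 0"
    and S: "\<And>t. t \<in> I \<Longrightarrow> 2 * p1 t * p3 t - 3 * (p2 t)^2 = 0"
    and T: "\<And>t. t \<in> I \<Longrightarrow> 2 * p1 t * e3 t - 3 * p2 t * e2 t = 0"
    and t: "t \<in> I"
  shows "2 * p1 t0 - p2 t0 * (t - t0) \<noteq> 0"
    "p0 t * (2 * p1 t0 - p2 t0 * (t - t0)) = 2 * p0 t0 * p1 t0 + (2 * (p1 t0)^2 - p0 t0 * p2 t0) * (t - t0)"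
    "e0 t * (2 * p1 t0 - p2 t0 * (t - t0)) = 2 * e0 t0 * p1 t0 + (2 * e1 t0 * p1 t0 - e0 t0 * p2 t0) * (t - t0)
        + (e2 t0 * p1 t0 - e1 t0 * p2 t0) * (t - t0)^2"
proof -
  define D where "D s = 2 * p1 t0 - p2 t0 * (s - t0)" for s
  define E where "E s = p2 s * D s - 2 * p1 s * p2 t0" for s
  have dD: "(D has_real_derivative - p2 t0) (at s)" for s
    unfolding D_def by (auto intro!: derivative_eq_intros)
  have dE: "(E has_real_derivative p3 s * D s - 3 * p2 s * p2 t0) (at s)" if "s \<in> I" for s
    unfolding E_def using dp2[OF that] dp1[OF that] dD[of s]
    by (auto intro!: derivative_eq_intros simp: algebra_simps)
  define W where "W s = E s * ((p1 s)^2) powr (-3/4)" for s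
  have W0: "(W has_real_derivative 0) (at s)" if s: "s \<in> I" for s
  proof -
    have pos: "(p1 s)^2 > 0" using nz[OF s] by simp
    have "(W has_real_derivative (p3 s * D s - 3 * p2 s * p2 t0) * ((p1 s)^2) powr (-3/4)
             + E s * (-3/4 * ((p1 s)^2) powr (-3/4 - 1) * (2 * p1 s * p2 s))) (at s)"
    proof -
      have dp: "((\<lambda>s. (p1 s)^2) has_real_derivative 2 * p1 s * p2 s) (at s)"
        using dp1[OF s] by (auto intro!: derivative_eq_intros)
      show ?thesis unfolding W_def
        using DERIV_mult[OF dE[OF s] DERIV_fun_powr[OF dp pos, of "-3/4"]] by (simp add: algebra_simps)
    qed
    moreover have eq: "(p3 s * D s - 3 * p2 s * p2 t0) * ((p1 s)^2) powr (-3/4)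
             + E s * (-3/4 * ((p1 s)^2) powr (-3/4 - 1) * (2 * p1 s * p2 s)) = 0"
    proof -
      have pw: "((p1 s)^2) powr (-3/4 - 1) = ((p1 s)^2) powr (-3/4) / (p1 s)^2"
        using powr_diff[of "(p1 s)^2" "-3/4" 1] pos by simp
      have p3: "p3 s = 3 * (p2 s)^2 / (2 * p1 s)" using S[OF s] nz[OF s] by (simp add: field_simps)
      show ?thesis unfolding pw p3 E_def using nz[OF s]
        by (simp add: field_simps power2_eq_square)
    qed
    ultimately show ?thesis by (simp only: eq)
  qed
  have E0: "E s = 0" if s: "s \<in> I" for s
  proof -
    have "W s = W t0" by (rule deriv0_const[OF I W0 s t0])
    moreover have "W t0 = 0" by (simp add: W_def E_def D_def)
    ultimately have "E s * ((p1 s)^2) powr (-3/4) = 0" by (simp add: W_def)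
    moreover have "((p1 s)^2) powr (-3/4) > 0" using nz[OF s] by simp
    ultimately show ?thesis by simp
  qed
  have V0: "((\<lambda>s. p1 s * (D s)^2) has_real_derivative 0) (at s)" if s: "s \<in> I" for s
  proof -
    have "((\<lambda>s. p1 s * (D s)^2) has_real_derivative p2 s * (D s)^2 + p1 s * (2 * D s * (- p2 t0))) (at s)"
      using dp1[OF s] dD[of s] by (auto intro!: derivative_eq_intros simp: algebra_simps)
    moreover have "p2 s * (D s)^2 + p1 s * (2 * D s * (- p2 t0)) = D s * E s"
      by (simp add: E_def algebra_simps power2_eq_square)
    ultimately show ?thesis using E0[OF s] by simp
  qed
  have "p1 t * (D t)^2 = p1 t0 * (D t0)^2" by (rule deriv0_const[OF I V0 t t0])
  moreover have "p1 t0 * (D t0)^2 \<noteq> 0" using nz[OF t0] by (simp add: D_def)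
  ultimately have Dnz: "D t \<noteq> 0" by auto
  then show "2 * p1 t0 - p2 t0 * (t - t0) \<noteq> 0" by (simp add: D_def)
  have dPhi: "((\<lambda>s. p0 s * D s) has_real_derivative p1 s * D s - p0 s * p2 t0) (at s)" if s: "s \<in> I" for s
    using dp0[OF s] dD[of s] by (auto intro!: derivative_eq_intros simp: algebra_simps)
  have dPhi1: "((\<lambda>s. p1 s * D s - p0 s * p2 t0) has_real_derivative 0) (at s)" if s: "s \<in> I" for s
  proof -
    have "((\<lambda>s. p1 s * D s - p0 s * p2 t0) has_real_derivative p2 s * D s - p1 s * p2 t0 - p1 s * p2 t0) (at s)"
      using dp0[OF s] dp1[OF s] dD[of s] by (auto intro!: derivative_eq_intros simp: algebra_simps)
    then show ?thesis using E0[OF s] by (simp add: E_def)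
  qed
  have "p0 t * D t = p0 t0 * D t0 + (p1 t0 * D t0 - p0 t0 * p2 t0) * (t - t0) + 0 / 2 * (t - t0)^2"
    by (rule deriv_quad[OF I dPhi dPhi1 t t0])
  then show "p0 t * (2 * p1 t0 - p2 t0 * (t - t0)) = 2 * p0 t0 * p1 t0 + (2 * (p1 t0)^2 - p0 t0 * p2 t0) * (t - t0)"
    by (simp add: D_def algebra_simps power2_eq_square)
  have dPsi: "((\<lambda>s. e0 s * D s) has_real_derivative e1 s * D s - e0 s * p2 t0) (at s)" if s: "s \<in> I" for s
    using de0[OF s] dD[of s] by (auto intro!: derivative_eq_intros simp: algebra_simps)
  have dPsi1: "((\<lambda>s. e1 s * D s - e0 s * p2 t0) has_real_derivative e2 s * D s - 2 * e1 s * p2 t0) (at s)" if s: "s \<in> I" for s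
    using de0[OF s] de1[OF s] dD[of s] by (auto intro!: derivative_eq_intros simp: algebra_simps)
  have dPsi2: "((\<lambda>s. e2 s * D s - 2 * e1 s * p2 t0) has_real_derivative 0) (at s)" if s: "s \<in> I" for s
  proof -
    have "((\<lambda>s. e2 s * D s - 2 * e1 s * p2 t0) has_real_derivative e3 s * D s - e2 s * p2 t0 - 2 * e2 s * p2 t0) (at s)"
      using de1[OF s] de2[OF s] dD[of s] by (auto intro!: derivative_eq_intros simp: algebra_simps)
    moreover have "e3 s * D s - e2 s * p2 t0 - 2 * e2 s * p2 t0 = 0"
    proof -
      have "2 * p1 s * (e3 s * D s - e2 s * p2 t0 - 2 * e2 s * p2 t0) = 3 * e2 s * E s"
        using T[OF s] unfolding E_def by (simp add: algebra_simps)
      then show ?thesis using E0[OF s] nz[OF s] by simp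
    qed
    ultimately show ?thesis by simp
  qed
  have c2: "e2 s * D s - 2 * e1 s * p2 t0 = e2 t0 * D t0 - 2 * e1 t0 * p2 t0" if s: "s \<in> I" for s
    by (rule deriv0_const[OF I dPsi2 s t0])
  have dPsi1': "((\<lambda>s. e1 s * D s - e0 s * p2 t0) has_real_derivative e2 t0 * D t0 - 2 * e1 t0 * p2 t0) (at s)" if s: "s \<in> I" for s
    using dPsi1[OF s] c2[OF s] by simp
  have "e0 t * D t = e0 t0 * D t0 + (e1 t0 * D t0 - e0 t0 * p2 t0) * (t - t0) + (e2 t0 * D t0 - 2 * e1 t0 * p2 t0) / 2 * (t - t0)^2"
    by (rule deriv_quad[OF I dPsi dPsi1' t t0])
  then show "e0 t * (2 * p1 t0 - p2 t0 * (t - t0)) = 2 * e0 t0 * p1 t0 + (2 * e1 t0 * p1 t0 - e0 t0 * p2 t0) * (t - t0)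
        + (e2 t0 * p1 t0 - e1 t0 * p2 t0) * (t - t0)^2"
    by (simp add: D_def field_simps power2_eq_square)
qed

type_synonym idx = "nat \<times> nat \<times> nat \<times> nat"
type_synonym coef = "nat \<Rightarrow> nat \<Rightarrow> nat \<Rightarrow> nat \<Rightarrow> real"

definition trm :: "coef \<Rightarrow> R4 \<Rightarrow> idx \<Rightarrow> real" where
  "trm c x = (\<lambda>(i,j,k,l). c i j k l * fst x ^ i * fst (snd x) ^ j * fst (snd (snd x)) ^ k * snd (snd (snd x)) ^ l)"

definition PS :: "coef \<Rightarrow> R4 \<Rightarrow> real" where
  "PS c x = infsum (trm c x) UNIV"

definition mjr :: "coef \<Rightarrow> real \<Rightarrow> idx \<Rightarrow> real" where
  "mjr c r = (\<lambda>(i,j,k,l). \<bar>c i j k l\<bar> * r ^ (i+j+k+l))"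

definition Hc :: "coef \<Rightarrow> real \<Rightarrow> bool" where
  "Hc c \<rho> \<longleftrightarrow> (\<forall>r. 0 \<le> r \<and> r < \<rho> \<longrightarrow> mjr c r summable_on UNIV)"

definition box0 :: "real \<Rightarrow> R4 set" where
  "box0 \<rho> = {x. \<bar>fst x\<bar> < \<rho> \<and> \<bar>fst (snd x)\<bar> < \<rho> \<and> \<bar>fst (snd (snd x))\<bar> < \<rho> \<and> \<bar>snd (snd (snd x))\<bar> < \<rho>}"

lemma open_box0: "open (box0 \<rho>)"
  unfolding box0_def by (intro open_Collect_conj open_Collect_less continuous_intros)

lemma mjr_nonneg: "r \<ge> 0 \<Longrightarrow> mjr c r n \<ge> 0"
  by (cases n rule: prod_cases4) (simp add: mjr_def)

lemma mjr_mono: "0 \<le> r \<Longrightarrow> r \<le> R \<Longrightarrow> mjr c r n \<le> mjr c R n"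
  by (cases n rule: prod_cases4) (auto simp: mjr_def intro!: mult_left_mono power_mono)

lemma Hc_summ: assumes "Hc c \<rho>" "0 \<le> r" "r < \<rho>" shows "mjr c r summable_on UNIV"
  using assms by (simp add: Hc_def)

lemma summ_at:
  assumes H: "Hc c \<rho>" and x: "x \<in> box0 \<rho>"
  shows "trm c x summable_on UNIV"
proof -
  define r where "r = max (max \<bar>fst x\<bar> \<bar>fst (snd x)\<bar>) (max \<bar>fst (snd (snd x))\<bar> \<bar>snd (snd (snd x))\<bar>)"
  have r: "0 \<le> r" "r < \<rho>" using x by (auto simp: r_def box0_def)
  have "(\<lambda>n. norm (trm c x n)) summable_on UNIV"
  proof (rule summable_on_comparison_test)
    show "mjr c r summable_on UNIV"
      using Hc_summ[OF H r] by simp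
    fix n show "0 \<le> norm (trm c x n)" by simp
    show "norm (trm c x n) \<le> mjr c r n"
    proof (cases n rule: prod_cases4)
      case (fields i j k l)
      have b: "\<bar>fst x\<bar> \<le> r" "\<bar>fst (snd x)\<bar> \<le> r" "\<bar>fst (snd (snd x))\<bar> \<le> r" "\<bar>snd (snd (snd x))\<bar> \<le> r"
        by (auto simp: r_def le_max_iff_disj)
      have "\<bar>c i j k l * fst x ^ i * fst (snd x) ^ j * fst (snd (snd x)) ^ k * snd (snd (snd x)) ^ l\<bar>
          \<le> \<bar>c i j k l\<bar> * r ^ i * r ^ j * r ^ k * r ^ l"
        unfolding abs_mult power_abs
        by (intro mult_mono power_mono b) (auto simp: r)
      then show ?thesis using fields r by (simp add: trm_def mjr_def power_add mult.assoc)
    qed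
  qed
  then show ?thesis by (rule abs_summable_summable)
qed

lemma n_theta: assumes "0 \<le> \<theta>" "\<theta> < 1" shows "real n * \<theta> ^ n \<le> 1 / (1 - \<theta>)"
proof -
  have "real n * \<theta> ^ n = (\<Sum>k<n. \<theta> ^ n)" by simp
  also have "\<dots> \<le> (\<Sum>k<n. \<theta> ^ k)"
    by (intro sum_mono power_decreasing) (use assms in auto)
  also have "\<dots> = (1 - \<theta> ^ n) / (1 - \<theta>)" using assms by (simp add: sum_gp_strict)
  also have "\<dots> \<le> 1 / (1 - \<theta>)" using assms by (simp add: divide_right_mono)
  finally show ?thesis .
qed

lemma n_pow:
  assumes "0 < r" "r < R"
  shows "real a * r ^ (a - 1) \<le> 1 / (r * (1 - r / R)) * R ^ a"
proof (cases a)
  case 0 then show ?thesis using assms by simp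
next
  case (Suc b)
  have R: "R > 0" using assms by simp
  have "real a * r ^ (a - 1) = real a * (r / R) ^ a * R ^ a / r"
    using Suc assms R by (simp add: power_divide field_simps)
  also have "\<dots> \<le> 1 / (1 - r / R) * R ^ a / r"
    by (intro divide_right_mono mult_right_mono n_theta) (use assms R in auto)
  also have "\<dots> = 1 / (r * (1 - r / R)) * R ^ a" by simp
  finally show ?thesis .
qed


definition sh1 :: "coef \<Rightarrow> coef" where "sh1 c i j k l = real (Suc i) * c (Suc i) j k l"
definition sh2 :: "coef \<Rightarrow> coef" where "sh2 c i j k l = real (Suc j) * c i (Suc j) k l"
definition sh3 :: "coef \<Rightarrow> coef" where "sh3 c i j k l = real (Suc k) * c i j (Suc k) l"
definition sh4 :: "coef \<Rightarrow> coef" where "sh4 c i j k l = real (Suc l) * c i j k (Suc l)"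

definition s1 :: "idx \<Rightarrow> idx" where "s1 = (\<lambda>(i,j,k,l). (Suc i,j,k,l))"
definition s2 :: "idx \<Rightarrow> idx" where "s2 = (\<lambda>(i,j,k,l). (i,Suc j,k,l))"
definition s3 :: "idx \<Rightarrow> idx" where "s3 = (\<lambda>(i,j,k,l). (i,j,Suc k,l))"
definition s4 :: "idx \<Rightarrow> idx" where "s4 = (\<lambda>(i,j,k,l). (i,j,k,Suc l))"

lemma inj_s: "inj s1" "inj s2" "inj s3" "inj s4"
  unfolding inj_def s1_def s2_def s3_def s4_def by auto

lemma pow_bound:
  assumes "0 \<le> r" "r \<le> r2" "0 < r2" "r2 < R"
  shows "real (Suc i) * r ^ (i + m) \<le> 1 / (r2 * (1 - r2 / R)) * R ^ (Suc i + m)"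
proof -
  have "real (Suc i) * r ^ (i + m) = (real (Suc i) * r ^ i) * r ^ m" by (simp add: power_add)
  also have "\<dots> \<le> (real (Suc i) * r2 ^ (Suc i - 1)) * R ^ m"
    by (intro mult_mono power_mono) (use assms in \<open>auto simp: power_mono\<close>)
  also have "\<dots> \<le> (1 / (r2 * (1 - r2 / R)) * R ^ (Suc i)) * R ^ m"
    by (intro mult_right_mono n_pow) (use assms in auto)
  also have "\<dots> = 1 / (r2 * (1 - r2 / R)) * R ^ (Suc i + m)" by (simp add: power_add)
  finally show ?thesis .
qed

lemma Hc_shift_gen:
  assumes H: "Hc c \<rho>" and inj: "inj s"
    and b: "\<And>r r2 R n. 0 \<le> r \<Longrightarrow> r \<le> r2 \<Longrightarrow> 0 < r2 \<Longrightarrow> r2 < R \<Longrightarrow>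
              mjr c' r n \<le> 1 / (r2 * (1 - r2 / R)) * mjr c R (s n)"
  shows "Hc c' \<rho>"
  unfolding Hc_def
proof (intro allI impI)
  fix r assume r: "0 \<le> r \<and> r < \<rho>"
  define R where "R = (r + \<rho>) / 2"
  define r2 where "r2 = (r + R) / 2"
  have rr1: "0 \<le> r" using r by linarith
  have rr2: "r \<le> r2" using r unfolding R_def r2_def by (auto simp: field_simps)
  have rr3: "0 < r2" using r unfolding R_def r2_def by (auto simp: field_simps)
  have rr4: "r2 < R" using r unfolding R_def r2_def by (auto simp: field_simps)
  have rr5: "R < \<rho>" using r unfolding R_def r2_def by (auto simp: field_simps)
  have rr6: "0 \<le> R" using r unfolding R_def r2_def by (auto simp: field_simps)
  note rr = rr1 rr2 rr3 rr4 rr5 rr6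
  have "mjr c R summable_on range s"
    using Hc_summ[OF H rr(6,5)] by (rule summable_on_subset_banach) auto
  then have "(mjr c R \<circ> s) summable_on UNIV"
    using summable_on_reindex[OF inj_on_subset[OF inj subset_UNIV], of "mjr c R"] by simp
  then have "(\<lambda>n. 1 / (r2 * (1 - r2 / R)) * mjr c R (s n)) summable_on UNIV"
    by (intro summable_on_cmult_right) (simp add: o_def)
  then show "mjr c' r summable_on UNIV"
    by (rule summable_on_comparison_test) (use b[OF rr(1-4)] mjr_nonneg[OF rr(1)] in auto)
qed

lemma Hc_sh1: "Hc c \<rho> \<Longrightarrow> Hc (sh1 c) \<rho>"
proof (erule Hc_shift_gen[OF _ inj_s(1)])
  fix r r2 R :: real and n :: idx
  assume a: "0 \<le> r" "r \<le> r2" "0 < r2" "r2 < R"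
  obtain i j k l where n: "n = (i,j,k,l)" by (cases n rule: prod_cases4)
  have "\<bar>c (Suc i) j k l\<bar> * (real (Suc i) * r ^ (i + (j + k + l)))
      \<le> \<bar>c (Suc i) j k l\<bar> * (1 / (r2 * (1 - r2 / R)) * R ^ (Suc i + (j + k + l)))"
    by (intro mult_left_mono pow_bound a) simp
  then show "mjr (sh1 c) r n \<le> 1 / (r2 * (1 - r2 / R)) * mjr c R (s1 n)"
    by (simp add: n mjr_def sh1_def s1_def abs_mult add.assoc mult_ac)
qed

lemma Hc_sh2: "Hc c \<rho> \<Longrightarrow> Hc (sh2 c) \<rho>"
proof (erule Hc_shift_gen[OF _ inj_s(2)])
  fix r r2 R :: real and n :: idx
  assume a: "0 \<le> r" "r \<le> r2" "0 < r2" "r2 < R"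
  obtain i j k l where n: "n = (i,j,k,l)" by (cases n rule: prod_cases4)
  have "\<bar>c i (Suc j) k l\<bar> * (real (Suc j) * r ^ (j + (i + k + l)))
      \<le> \<bar>c i (Suc j) k l\<bar> * (1 / (r2 * (1 - r2 / R)) * R ^ (Suc j + (i + k + l)))"
    by (intro mult_left_mono pow_bound a) simp
  then show "mjr (sh2 c) r n \<le> 1 / (r2 * (1 - r2 / R)) * mjr c R (s2 n)"
    by (simp add: n mjr_def sh2_def s2_def abs_mult add_ac mult_ac)
qed

lemma Hc_sh3: "Hc c \<rho> \<Longrightarrow> Hc (sh3 c) \<rho>"
proof (erule Hc_shift_gen[OF _ inj_s(3)])
  fix r r2 R :: real and n :: idx
  assume a: "0 \<le> r" "r \<le> r2" "0 < r2" "r2 < R"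
  obtain i j k l where n: "n = (i,j,k,l)" by (cases n rule: prod_cases4)
  have "\<bar>c i j (Suc k) l\<bar> * (real (Suc k) * r ^ (k + (i + j + l)))
      \<le> \<bar>c i j (Suc k) l\<bar> * (1 / (r2 * (1 - r2 / R)) * R ^ (Suc k + (i + j + l)))"
    by (intro mult_left_mono pow_bound a) simp
  then show "mjr (sh3 c) r n \<le> 1 / (r2 * (1 - r2 / R)) * mjr c R (s3 n)"
    by (simp add: n mjr_def sh3_def s3_def abs_mult add_ac mult_ac)
qed

lemma Hc_sh4: "Hc c \<rho> \<Longrightarrow> Hc (sh4 c) \<rho>"
proof (erule Hc_shift_gen[OF _ inj_s(4)])
  fix r r2 R :: real and n :: idx
  assume a: "0 \<le> r" "r \<le> r2" "0 < r2" "r2 < R"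
  obtain i j k l where n: "n = (i,j,k,l)" by (cases n rule: prod_cases4)
  have "\<bar>c i j k (Suc l)\<bar> * (real (Suc l) * r ^ (l + (i + j + k)))
      \<le> \<bar>c i j k (Suc l)\<bar> * (1 / (r2 * (1 - r2 / R)) * R ^ (Suc l + (i + j + k)))"
    by (intro mult_left_mono pow_bound a) simp
  then show "mjr (sh4 c) r n \<le> 1 / (r2 * (1 - r2 / R)) * mjr c R (s4 n)"
    by (simp add: n mjr_def sh4_def s4_def abs_mult add_ac mult_ac)
qed

definition D1 :: "coef \<Rightarrow> R4 \<Rightarrow> R4 \<Rightarrow> idx \<Rightarrow> real" where
  "D1 c x v = (\<lambda>(i,j,k,l). c i j k l * (real i * fst x ^ (i - 1) * fst v) * fst (snd x) ^ j * fst (snd (snd x)) ^ k * snd (snd (snd x)) ^ l)"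
definition D2 :: "coef \<Rightarrow> R4 \<Rightarrow> R4 \<Rightarrow> idx \<Rightarrow> real" where
  "D2 c x v = (\<lambda>(i,j,k,l). c i j k l * fst x ^ i * (real j * fst (snd x) ^ (j - 1) * fst (snd v)) * fst (snd (snd x)) ^ k * snd (snd (snd x)) ^ l)"
definition D3 :: "coef \<Rightarrow> R4 \<Rightarrow> R4 \<Rightarrow> idx \<Rightarrow> real" where
  "D3 c x v = (\<lambda>(i,j,k,l). c i j k l * fst x ^ i * fst (snd x) ^ j * (real k * fst (snd (snd x)) ^ (k - 1) * fst (snd (snd v))) * snd (snd (snd x)) ^ l)"
definition D4 :: "coef \<Rightarrow> R4 \<Rightarrow> R4 \<Rightarrow> idx \<Rightarrow> real" where
  "D4 c x v = (\<lambda>(i,j,k,l). c i j k l * fst x ^ i * fst (snd x) ^ j * fst (snd (snd x)) ^ k * (real l * snd (snd (snd x)) ^ (l - 1) * snd (snd (snd v))))"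

definition dtrm :: "coef \<Rightarrow> R4 \<Rightarrow> R4 \<Rightarrow> idx \<Rightarrow> real" where
  "dtrm c x v n = D1 c x v n + D2 c x v n + D3 c x v n + D4 c x v n"

lemma trm_deriv: "((\<lambda>x. trm c x n) has_derivative (\<lambda>v. dtrm c x v n)) (at x)"
proof (cases n rule: prod_cases4)
  case (fields i j k l)
  show ?thesis unfolding fields trm_def dtrm_def D1_def D2_def D3_def D4_def
    by (auto intro!: derivative_eq_intros ext simp: algebra_simps)
qed

lemma D1_has_sum:
  assumes H: "Hc c \<rho>" and x: "x \<in> box0 \<rho>"
  shows "(D1 c x v has_sum (fst v * PS (sh1 c) x)) UNIV"
proof -
  have "(trm (sh1 c) x has_sum PS (sh1 c) x) UNIV"
    unfolding PS_def using summ_at[OF Hc_sh1[OF H] x] by simp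
  then have "((\<lambda>n. fst v * trm (sh1 c) x n) has_sum (fst v * PS (sh1 c) x)) UNIV"
    by (rule has_sum_cmult_right)
  moreover have "(D1 c x v \<circ> s1) = (\<lambda>n. fst v * trm (sh1 c) x n)"
    by (auto simp: D1_def s1_def trm_def sh1_def fun_eq_iff mult_ac)
  ultimately have "(D1 c x v has_sum (fst v * PS (sh1 c) x)) (range s1)"
    using has_sum_reindex[OF inj_on_subset[OF inj_s(1) subset_UNIV], of "D1 c x v"] by simp
  moreover have "D1 c x v n = 0" if "n \<notin> range s1" for n
  proof (cases n rule: prod_cases4)
    case (fields i j k l)
    then have "i = 0" using that by (cases i) (auto simp: s1_def image_iff)
    then show ?thesis by (simp add: fields D1_def)
  qed
  ultimately show ?thesis
    by (subst has_sum_cong_neutral[where T = "range s1" and g = "D1 c x v"]) auto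
qed

lemma D2_has_sum:
  assumes H: "Hc c \<rho>" and x: "x \<in> box0 \<rho>"
  shows "(D2 c x v has_sum ((fst (snd v)) * PS (sh2 c) x)) UNIV"
proof -
  have "(trm (sh2 c) x has_sum PS (sh2 c) x) UNIV"
    unfolding PS_def using summ_at[OF Hc_sh2[OF H] x] by simp
  then have "((\<lambda>n. (fst (snd v)) * trm (sh2 c) x n) has_sum ((fst (snd v)) * PS (sh2 c) x)) UNIV"
    by (rule has_sum_cmult_right)
  moreover have "(D2 c x v \<circ> s2) = (\<lambda>n. (fst (snd v)) * trm (sh2 c) x n)"
    by (auto simp: D2_def s2_def trm_def sh2_def fun_eq_iff mult_ac)
  ultimately have "(D2 c x v has_sum ((fst (snd v)) * PS (sh2 c) x)) (range s2)"
    using has_sum_reindex[OF inj_on_subset[OF inj_s(2) subset_UNIV], of "D2 c x v"] by simp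
  moreover have "D2 c x v n = 0" if "n \<notin> range s2" for n
  proof (cases n rule: prod_cases4)
    case (fields i j k l)
    then have "j = 0" using that by (cases j) (auto simp: s2_def image_iff)
    then show ?thesis by (simp add: fields D2_def)
  qed
  ultimately show ?thesis
    by (subst has_sum_cong_neutral[where T = "range s2" and g = "D2 c x v"]) auto
qed

lemma D3_has_sum:
  assumes H: "Hc c \<rho>" and x: "x \<in> box0 \<rho>"
  shows "(D3 c x v has_sum ((fst (snd (snd v))) * PS (sh3 c) x)) UNIV"
proof -
  have "(trm (sh3 c) x has_sum PS (sh3 c) x) UNIV"
    unfolding PS_def using summ_at[OF Hc_sh3[OF H] x] by simp
  then have "((\<lambda>n. (fst (snd (snd v))) * trm (sh3 c) x n) has_sum ((fst (snd (snd v))) * PS (sh3 c) x)) UNIV"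
    by (rule has_sum_cmult_right)
  moreover have "(D3 c x v \<circ> s3) = (\<lambda>n. (fst (snd (snd v))) * trm (sh3 c) x n)"
    by (auto simp: D3_def s3_def trm_def sh3_def fun_eq_iff mult_ac)
  ultimately have "(D3 c x v has_sum ((fst (snd (snd v))) * PS (sh3 c) x)) (range s3)"
    using has_sum_reindex[OF inj_on_subset[OF inj_s(3) subset_UNIV], of "D3 c x v"] by simp
  moreover have "D3 c x v n = 0" if "n \<notin> range s3" for n
  proof (cases n rule: prod_cases4)
    case (fields i j k l)
    then have "k = 0" using that by (cases k) (auto simp: s3_def image_iff)
    then show ?thesis by (simp add: fields D3_def)
  qed
  ultimately show ?thesis
    by (subst has_sum_cong_neutral[where T = "range s3" and g = "D3 c x v"]) auto
qed

lemma D4_has_sum: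
  assumes H: "Hc c \<rho>" and x: "x \<in> box0 \<rho>"
  shows "(D4 c x v has_sum ((snd (snd (snd v))) * PS (sh4 c) x)) UNIV"
proof -
  have "(trm (sh4 c) x has_sum PS (sh4 c) x) UNIV"
    unfolding PS_def using summ_at[OF Hc_sh4[OF H] x] by simp
  then have "((\<lambda>n. (snd (snd (snd v))) * trm (sh4 c) x n) has_sum ((snd (snd (snd v))) * PS (sh4 c) x)) UNIV"
    by (rule has_sum_cmult_right)
  moreover have "(D4 c x v \<circ> s4) = (\<lambda>n. (snd (snd (snd v))) * trm (sh4 c) x n)"
    by (auto simp: D4_def s4_def trm_def sh4_def fun_eq_iff mult_ac)
  ultimately have "(D4 c x v has_sum ((snd (snd (snd v))) * PS (sh4 c) x)) (range s4)"
    using has_sum_reindex[OF inj_on_subset[OF inj_s(4) subset_UNIV], of "D4 c x v"] by simp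
  moreover have "D4 c x v n = 0" if "n \<notin> range s4" for n
  proof (cases n rule: prod_cases4)
    case (fields i j k l)
    then have "l = 0" using that by (cases l) (auto simp: s4_def image_iff)
    then show ?thesis by (simp add: fields D4_def)
  qed
  ultimately show ?thesis
    by (subst has_sum_cong_neutral[where T = "range s4" and g = "D4 c x v"]) auto
qed

definition Bx :: "nat \<Rightarrow> idx set" where "Bx N = {..N} \<times> {..N} \<times> {..N} \<times> {..N}"

lemma finite_Bx: "finite (Bx N)" by (simp add: Bx_def)

lemma filterlim_Bx: "filterlim Bx (finite_subsets_at_top UNIV) sequentially"
  unfolding filterlim_finite_subsets_at_top
proof (safe, goal_cases)
  case (1 X)
  define sz where "sz = (\<lambda>(i::nat,j::nat,k::nat,l::nat). i+j+k+l)"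
  obtain N where N: "\<forall>n\<in>sz ` X. n \<le> N"
    using 1 finite_nat_set_iff_bounded_le[of "sz ` X"] by auto
  have "X \<subseteq> Bx M" if "M \<ge> N" for M
  proof
    fix n assume "n \<in> X"
    then have "sz n \<le> N" using N by auto
    then show "n \<in> Bx M" using that by (cases n rule: prod_cases4) (auto simp: sz_def Bx_def)
  qed
  then show ?case unfolding eventually_sequentially by (auto simp: finite_Bx)
qed

lemma has_sum_Bx:
  assumes "(f has_sum s) UNIV"
  shows "(\<lambda>N. sum f (Bx N)) \<longlonglongrightarrow> s"
proof -
  have "(sum f \<longlongrightarrow> s) (finite_subsets_at_top UNIV)" using assms by (simp add: has_sum_def)
  then show ?thesis using filterlim_compose[OF _ filterlim_Bx] by (simp add: o_def)
qed

lemma convex_box0: "convex (box0 r)"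
proof -
  have "box0 r = (fst -` ball 0 r) \<inter> ((\<lambda>x. fst (snd x)) -` ball 0 r) \<inter>
      ((\<lambda>x. fst (snd (snd x))) -` ball 0 r) \<inter> ((\<lambda>x. snd (snd (snd x))) -` ball 0 r)"
    by (auto simp: box0_def)
  moreover have "linear (fst :: R4 \<Rightarrow> real)" "linear (\<lambda>x::R4. fst (snd x))"
    "linear (\<lambda>x::R4. fst (snd (snd x)))" "linear (\<lambda>x::R4. snd (snd (snd x)))"
    by (auto intro!: linearI)
  ultimately show ?thesis
    by (metis convex_Int convex_ball convex_linear_vimage)
qed


lemma proj_le:
  fixes h :: R4
  shows "\<bar>fst h\<bar> \<le> norm h" "\<bar>fst (snd h)\<bar> \<le> norm h" "\<bar>fst (snd (snd h))\<bar> \<le> norm h" "\<bar>snd (snd (snd h))\<bar> \<le> norm h"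
proof -
  have 1: "norm (fst p) \<le> norm p" "norm (snd p) \<le> norm p" for p :: "'a::real_normed_vector \<times> 'b::real_normed_vector"
    using norm_fst_le[of "fst p" "snd p"] norm_snd_le[of "snd p" "fst p"] by auto
  show "\<bar>fst h\<bar> \<le> norm h" using 1(1)[of h] by simp
  show "\<bar>fst (snd h)\<bar> \<le> norm h" using 1(1)[of "snd h"] 1(2)[of h] by simp
  show "\<bar>fst (snd (snd h))\<bar> \<le> norm h" using 1(1)[of "snd (snd h)"] 1(2)[of h] 1(2)[of "snd h"] by simp
  show "\<bar>snd (snd (snd h))\<bar> \<le> norm h" using 1(2)[of "snd (snd h)"] 1(2)[of h] 1(2)[of "snd h"] by simp
qed

lemma Kpos: fixes r R :: real assumes "0 < r" "r < R" shows "0 < 1 / (r * (1 - r / R))"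
proof -
  have "r / R < 1" using assms by simp
  then show ?thesis using assms by simp
qed

lemma npow_abs:
  assumes "0 < r" "r < R" "\<bar>y\<bar> \<le> r"
  shows "real i * \<bar>y\<bar> ^ (i - 1) \<le> 1 / (r * (1 - r / R)) * R ^ i" "\<bar>y\<bar> ^ j \<le> R ^ j"
proof -
  have "real i * \<bar>y\<bar> ^ (i - 1) \<le> real i * r ^ (i - 1)"
    by (intro mult_left_mono power_mono) (use assms in auto)
  also have "\<dots> \<le> 1 / (r * (1 - r / R)) * R ^ i" by (rule n_pow[OF assms(1,2)])
  finally show "real i * \<bar>y\<bar> ^ (i - 1) \<le> 1 / (r * (1 - r / R)) * R ^ i" .
  show "\<bar>y\<bar> ^ j \<le> R ^ j" by (intro power_mono) (use assms in auto)
qed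

lemma D1_bound:
  assumes r: "0 < r" "r < R" and x: "\<bar>fst x\<bar> \<le> r" "\<bar>fst (snd x)\<bar> \<le> r" "\<bar>fst (snd (snd x))\<bar> \<le> r" "\<bar>snd (snd (snd x))\<bar> \<le> r"
  shows "\<bar>D1 c x h n\<bar> \<le> 1 / (r * (1 - r / R)) * mjr c R n * norm h"
proof (cases n rule: prod_cases4)
  case (fields i j k l)
  define K where "K = 1 / (r * (1 - r / R))"
  have K: "0 < K" using Kpos[OF r] by (simp add: K_def)
  note b = npow_abs[OF r, folded K_def]
  have "\<bar>D1 c x h n\<bar> = \<bar>c i j k l\<bar> * ((real i * \<bar>fst x\<bar> ^ (i - 1)) * \<bar>fst h\<bar>) * \<bar>fst (snd x)\<bar> ^ j * \<bar>fst (snd (snd x))\<bar> ^ k * \<bar>snd (snd (snd x))\<bar> ^ l"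
    by (simp add: fields D1_def abs_mult power_abs mult_ac)
  also have "\<dots> \<le> \<bar>c i j k l\<bar> * ((K * R ^ i) * norm h) * R ^ j * R ^ k * R ^ l"
    using r K by (intro mult_mono mult_left_mono b x proj_le) auto
  also have "\<dots> = K * mjr c R n * norm h" by (simp add: fields mjr_def power_add mult_ac)
  finally show ?thesis by (simp add: K_def)
qed

lemma D2_bound:
  assumes r: "0 < r" "r < R" and x: "\<bar>fst x\<bar> \<le> r" "\<bar>fst (snd x)\<bar> \<le> r" "\<bar>fst (snd (snd x))\<bar> \<le> r" "\<bar>snd (snd (snd x))\<bar> \<le> r"
  shows "\<bar>D2 c x h n\<bar> \<le> 1 / (r * (1 - r / R)) * mjr c R n * norm h"
proof (cases n rule: prod_cases4)
  case (fields i j k l)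
  define K where "K = 1 / (r * (1 - r / R))"
  have K: "0 < K" using Kpos[OF r] by (simp add: K_def)
  note b = npow_abs[OF r, folded K_def]
  have "\<bar>D2 c x h n\<bar> = \<bar>c i j k l\<bar> * \<bar>fst x\<bar> ^ i * ((real j * \<bar>fst (snd x)\<bar> ^ (j - 1)) * \<bar>fst (snd h)\<bar>) * \<bar>fst (snd (snd x))\<bar> ^ k * \<bar>snd (snd (snd x))\<bar> ^ l"
    by (simp add: fields D2_def abs_mult power_abs mult_ac)
  also have "\<dots> \<le> \<bar>c i j k l\<bar> * R ^ i * ((K * R ^ j) * norm h) * R ^ k * R ^ l"
    using r K by (intro mult_mono mult_left_mono b x proj_le) auto
  also have "\<dots> = K * mjr c R n * norm h" by (simp add: fields mjr_def power_add mult_ac)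
  finally show ?thesis by (simp add: K_def)
qed

lemma D3_bound:
  assumes r: "0 < r" "r < R" and x: "\<bar>fst x\<bar> \<le> r" "\<bar>fst (snd x)\<bar> \<le> r" "\<bar>fst (snd (snd x))\<bar> \<le> r" "\<bar>snd (snd (snd x))\<bar> \<le> r"
  shows "\<bar>D3 c x h n\<bar> \<le> 1 / (r * (1 - r / R)) * mjr c R n * norm h"
proof (cases n rule: prod_cases4)
  case (fields i j k l)
  define K where "K = 1 / (r * (1 - r / R))"
  have K: "0 < K" using Kpos[OF r] by (simp add: K_def)
  note b = npow_abs[OF r, folded K_def]
  have "\<bar>D3 c x h n\<bar> = \<bar>c i j k l\<bar> * \<bar>fst x\<bar> ^ i * \<bar>fst (snd x)\<bar> ^ j * ((real k * \<bar>fst (snd (snd x))\<bar> ^ (k - 1)) * \<bar>fst (snd (snd h))\<bar>) * \<bar>snd (snd (snd x))\<bar> ^ l"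
    by (simp add: fields D3_def abs_mult power_abs mult_ac)
  also have "\<dots> \<le> \<bar>c i j k l\<bar> * R ^ i * R ^ j * ((K * R ^ k) * norm h) * R ^ l"
    using r K by (intro mult_mono mult_left_mono b x proj_le) auto
  also have "\<dots> = K * mjr c R n * norm h" by (simp add: fields mjr_def power_add mult_ac)
  finally show ?thesis by (simp add: K_def)
qed

lemma D4_bound:
  assumes r: "0 < r" "r < R" and x: "\<bar>fst x\<bar> \<le> r" "\<bar>fst (snd x)\<bar> \<le> r" "\<bar>fst (snd (snd x))\<bar> \<le> r" "\<bar>snd (snd (snd x))\<bar> \<le> r"
  shows "\<bar>D4 c x h n\<bar> \<le> 1 / (r * (1 - r / R)) * mjr c R n * norm h"
proof (cases n rule: prod_cases4)
  case (fields i j k l)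
  define K where "K = 1 / (r * (1 - r / R))"
  have K: "0 < K" using Kpos[OF r] by (simp add: K_def)
  note b = npow_abs[OF r, folded K_def]
  have "\<bar>D4 c x h n\<bar> = \<bar>c i j k l\<bar> * \<bar>fst x\<bar> ^ i * \<bar>fst (snd x)\<bar> ^ j * \<bar>fst (snd (snd x))\<bar> ^ k * ((real l * \<bar>snd (snd (snd x))\<bar> ^ (l - 1)) * \<bar>snd (snd (snd h))\<bar>)"
    by (simp add: fields D4_def abs_mult power_abs mult_ac)
  also have "\<dots> \<le> \<bar>c i j k l\<bar> * R ^ i * R ^ j * R ^ k * ((K * R ^ l) * norm h)"
    using r K by (intro mult_mono mult_left_mono b x proj_le) auto
  also have "\<dots> = K * mjr c R n * norm h" by (simp add: fields mjr_def power_add mult_ac)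
  finally show ?thesis by (simp add: K_def)
qed

definition dPS :: "coef \<Rightarrow> R4 \<Rightarrow> R4 \<Rightarrow> real" where
  "dPS c x v = fst v * PS (sh1 c) x + fst (snd v) * PS (sh2 c) x + fst (snd (snd v)) * PS (sh3 c) x + snd (snd (snd v)) * PS (sh4 c) x"

lemma dtrm_has_sum:
  assumes H: "Hc c \<rho>" and x: "x \<in> box0 \<rho>"
  shows "((\<lambda>n. dtrm c x v n) has_sum dPS c x v) UNIV"
  unfolding dtrm_def dPS_def
  by (intro has_sum_add D1_has_sum[OF H x] D2_has_sum[OF H x] D3_has_sum[OF H x] D4_has_sum[OF H x])

lemma dtrm_bound:
  assumes r: "0 < r" "r < R" and x: "\<bar>fst x\<bar> \<le> r" "\<bar>fst (snd x)\<bar> \<le> r" "\<bar>fst (snd (snd x))\<bar> \<le> r" "\<bar>snd (snd (snd x))\<bar> \<le> r"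
  shows "\<bar>dtrm c x h n\<bar> \<le> 4 * (1 / (r * (1 - r / R))) * mjr c R n * norm h"
proof -
  have "\<bar>dtrm c x h n\<bar> \<le> \<bar>D1 c x h n\<bar> + \<bar>D2 c x h n\<bar> + \<bar>D3 c x h n\<bar> + \<bar>D4 c x h n\<bar>"
    unfolding dtrm_def by linarith
  also have "\<dots> \<le> 4 * (1 / (r * (1 - r / R)) * mjr c R n * norm h)"
    using D1_bound[OF r x, of c h n] D2_bound[OF r x, of c h n] D3_bound[OF r x, of c h n] D4_bound[OF r x, of c h n]
    by linarith
  finally show ?thesis by (simp add: mult_ac)
qed

lemma PS_deriv:
  assumes H: "Hc c \<rho>" and x: "x \<in> box0 \<rho>"
  shows "(PS c has_derivative dPS c x) (at x)"
proof -
  define r0 where "r0 = max (max \<bar>fst x\<bar> \<bar>fst (snd x)\<bar>) (max \<bar>fst (snd (snd x))\<bar> \<bar>snd (snd (snd x))\<bar>)"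
  have r0: "0 \<le> r0" "r0 < \<rho>" using x by (auto simp: r0_def box0_def)
  define r where "r = (r0 + \<rho>) / 2"
  define R where "R = (r + \<rho>) / 2"
  have rr1: "0 < r" using r0 unfolding r_def by (auto simp: field_simps)
  have rr2: "r < R" using r0 unfolding R_def r_def by (auto simp: field_simps)
  have rr3: "R < \<rho>" using r0 unfolding R_def r_def by (auto simp: field_simps)
  have rr4: "r0 < r" using r0 unfolding r_def by (auto simp: field_simps)
  define S where "S = box0 r"
  have xS: "x \<in> S" using rr4 by (auto simp: S_def box0_def r0_def)
  have SS: "S \<subseteq> box0 \<rho>" using rr2 rr3 by (auto simp: S_def box0_def)
  have yb: "\<bar>fst y\<bar> \<le> r" "\<bar>fst (snd y)\<bar> \<le> r" "\<bar>fst (snd (snd y))\<bar> \<le> r" "\<bar>snd (snd (snd y))\<bar> \<le> r"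
    if "y \<in> S" for y using that by (auto simp: S_def box0_def)
  define K where "K = 4 * (1 / (r * (1 - r / R)))"
  define M where "M n = K * mjr c R n" for n
  have Msum: "M summable_on UNIV"
    unfolding M_def using Hc_summ[OF H _ rr3] rr1 rr2 by (intro summable_on_cmult_right) auto
  have Mnn: "M n \<ge> 0" for n
    unfolding M_def K_def using Kpos[OF rr1 rr2] mjr_nonneg[of R c n] rr1 rr2 by simp
  have derf: "((\<lambda>y. sum (trm c y) (Bx N)) has_derivative (\<lambda>h. sum (\<lambda>n. dtrm c y h n) (Bx N))) (at y within S)"
    for N y
    by (rule has_derivative_at_withinI, intro has_derivative_sum trm_deriv)
  have tl: "(\<lambda>N. infsum M (UNIV - Bx N)) \<longlonglongrightarrow> 0"
  proof -
    have "infsum M (UNIV - Bx N) = infsum M UNIV - sum M (Bx N)" for N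
      using infsum_Diff[OF Msum summable_on_subset_banach[OF Msum], of "Bx N"] finite_Bx by simp
    moreover have "(\<lambda>N. infsum M UNIV - sum M (Bx N)) \<longlonglongrightarrow> infsum M UNIV - infsum M UNIV"
      by (intro tendsto_diff tendsto_const has_sum_Bx) (use Msum in auto)
    ultimately show ?thesis by simp
  qed
  have nle: "\<forall>\<^sub>F N in sequentially. \<forall>y\<in>S. \<forall>h. norm (sum (\<lambda>n. dtrm c y h n) (Bx N) - dPS c y h) \<le> e * norm h"
    if e: "e > 0" for e
  proof -
    have "\<forall>\<^sub>F N in sequentially. infsum M (UNIV - Bx N) < e"
      using order_tendstoD(2)[OF tl e] .
    then show ?thesis
    proof eventually_elim
      case (elim N)
      show ?case
      proof (intro ballI allI)
        fix y h assume y: "y \<in> S"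
        have A: "((\<lambda>n. dtrm c y h n) has_sum dPS c y h) UNIV"
          using dtrm_has_sum[OF H, of y h] SS y by blast
        have B: "((\<lambda>n. dtrm c y h n) has_sum sum (\<lambda>n. dtrm c y h n) (Bx N)) (Bx N)"
          by (rule has_sum_finiteI[OF finite_Bx refl])
        have AB: "((\<lambda>n. dtrm c y h n) has_sum (dPS c y h - sum (\<lambda>n. dtrm c y h n) (Bx N))) (UNIV - Bx N)"
          by (rule has_sum_Diff[OF A B]) simp
        have C: "((\<lambda>n. M n * norm h) has_sum (infsum M (UNIV - Bx N) * norm h)) (UNIV - Bx N)"
          by (intro has_sum_cmult_left has_sum_infsum summable_on_subset_banach[OF Msum]) simp
        have "norm (dPS c y h - sum (\<lambda>n. dtrm c y h n) (Bx N)) \<le> infsum M (UNIV - Bx N) * norm h"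
        proof (rule norm_infsum_le[OF AB C])
          fix n show "norm (dtrm c y h n) \<le> M n * norm h"
            using dtrm_bound[OF rr1 rr2 yb[OF y], of c h n] by (simp add: M_def K_def)
        qed
        also have "\<dots> \<le> e * norm h" using elim by (intro mult_right_mono) auto
        finally show "norm (sum (\<lambda>n. dtrm c y h n) (Bx N) - dPS c y h) \<le> e * norm h"
          by (simp add: norm_minus_commute)
      qed
    qed
  qed
  have lim: "(\<lambda>N. sum (trm c x) (Bx N)) \<longlonglongrightarrow> PS c x"
    unfolding PS_def using summ_at[OF H x] by (intro has_sum_Bx) simp
  have cS: "convex S" by (simp add: S_def convex_box0)
  obtain g where g: "\<forall>y\<in>S. (\<lambda>N. sum (trm c y) (Bx N)) \<longlonglongrightarrow> g y \<and> (g has_derivative dPS c y) (at y within S)"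
    using has_derivative_sequence[OF cS derf nle xS lim] by blast
  have gPS: "PS c y = g y" if y: "y \<in> S" for y
  proof -
    have "(\<lambda>N. sum (trm c y) (Bx N)) \<longlonglongrightarrow> PS c y"
      unfolding PS_def using summ_at[OF H, of y] SS y by (intro has_sum_Bx) (auto simp del: split_paired_all)
    then show ?thesis using g y LIMSEQ_unique by blast
  qed
  have "(PS c has_derivative dPS c x) (at x within S)"
    by (rule has_derivative_transform[OF xS gPS]) (use g xS in auto)
  moreover have "open S" by (simp add: S_def open_box0)
  ultimately show ?thesis using at_within_open[OF xS] by simp
qed

lemma Ck_Suc_imp: "Ck_on (Suc k) S f \<Longrightarrow> Ck_on k S f"
proof (induction k arbitrary: f)
  case 0
  then obtain f' where "\<forall>x\<in>S. (f has_derivative f' x) (at x)" by auto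
  then show ?case
    by (auto intro!: continuous_at_imp_continuous_on has_derivative_continuous)
next
  case (Suc k)
  then obtain f' where "\<forall>x\<in>S. (f has_derivative f' x) (at x)" "\<forall>v. Ck_on (Suc k) S (\<lambda>x. f' x v)"
    by auto
  then show ?case using Suc.IH by auto
qed

lemma Ck_const: "Ck_on k S (\<lambda>x. c)"
proof (induction k arbitrary: c)
  case 0 then show ?case by simp
next
  case (Suc k)
  show ?case by (rule Ck_on.simps(2)[THEN iffD2], rule exI[of _ "\<lambda>x v. 0"]) (auto simp: Suc)
qed

lemma Ck_add: "Ck_on k S f \<Longrightarrow> Ck_on k S g \<Longrightarrow> Ck_on k S (\<lambda>x. f x + g x)"
proof (induction k arbitrary: f g)
  case 0 then show ?case by (auto intro: continuous_on_add)
next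
  case (Suc k)
  then obtain f' g' where f': "\<forall>x\<in>S. (f has_derivative f' x) (at x)" "\<forall>v. Ck_on k S (\<lambda>x. f' x v)"
    and g': "\<forall>x\<in>S. (g has_derivative g' x) (at x)" "\<forall>v. Ck_on k S (\<lambda>x. g' x v)"
    by auto
  show ?case
    by (rule Ck_on.simps(2)[THEN iffD2], rule exI[of _ "\<lambda>x v. f' x v + g' x v"])
       (use f' g' Suc.IH in \<open>auto intro: has_derivative_add\<close>)
qed

lemma Ck_mult:
  fixes f g :: "'a::euclidean_space \<Rightarrow> real"
  shows "Ck_on k S f \<Longrightarrow> Ck_on k S g \<Longrightarrow> Ck_on k S (\<lambda>x. f x * g x)"
proof (induction k arbitrary: f g)
  case 0 then show ?case by (auto intro: continuous_on_mult)
next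
  case (Suc k)
  have fk: "Ck_on k S f" and gk: "Ck_on k S g" using Suc.prems Ck_Suc_imp by blast+
  from Suc.prems obtain f' g' where f': "\<forall>x\<in>S. (f has_derivative f' x) (at x)" "\<forall>v. Ck_on k S (\<lambda>x. f' x v)"
    and g': "\<forall>x\<in>S. (g has_derivative g' x) (at x)" "\<forall>v. Ck_on k S (\<lambda>x. g' x v)"
    by auto
  show ?case
    apply (rule Ck_on.simps(2)[THEN iffD2], rule exI[of _ "\<lambda>x v. f x * g' x v + f' x v * g x"])
    apply (intro conjI ballI allI)
     apply (rule has_derivative_mult) using f' g' apply auto[2]
    apply (rule Ck_add)
    using Suc.IH fk gk f' g' by auto
qed

lemma Ck_cong:
  assumes "open S" "\<And>x. x \<in> S \<Longrightarrow> f x = g x" "Ck_on k S f"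
  shows "Ck_on k S g"
  using assms(2,3)
proof (induction k arbitrary: f g)
  case 0 then show ?case using continuous_on_cong by fastforce
next
  case (Suc k)
  then obtain f' where f': "\<forall>x\<in>S. (f has_derivative f' x) (at x)" "\<forall>v. Ck_on k S (\<lambda>x. f' x v)"
    by auto
  have "\<forall>x\<in>S. (g has_derivative f' x) (at x)"
    using f'(1) Suc.prems(1) assms(1) by (auto intro: has_derivative_transform_within_open)
  then show ?case using f'(2) by auto
qed

lemma Ck_compose_affine:
  fixes L :: "'a::euclidean_space \<Rightarrow> 'c::euclidean_space"
  assumes "\<And>x. (L has_derivative A) (at x)" 
  shows "Ck_on k S f \<Longrightarrow> (\<And>x. x \<in> T \<Longrightarrow> L x \<in> S) \<Longrightarrow> Ck_on k T (\<lambda>x. f (L x))"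
proof (induction k arbitrary: f)
  case 0
  have "continuous_on T L" using assms
    by (meson continuous_at_imp_continuous_on has_derivative_continuous)
  then show ?case using 0
    by (auto intro: continuous_on_compose2)
next
  case (Suc k)
  then obtain f' where f': "\<forall>x\<in>S. (f has_derivative f' x) (at x)" "\<forall>v. Ck_on k S (\<lambda>x. f' x v)"
    by auto
  show ?case
    apply (rule Ck_on.simps(2)[THEN iffD2], rule exI[of _ "\<lambda>x v. f' (L x) (A v)"])
    apply (intro conjI ballI allI)
    subgoal for x
      using diff_chain_at[OF assms, of f "f' (L x)" x] f'(1) Suc.prems(2)[of x] by (simp add: o_def)
    subgoal for v
      using Suc.IH[OF f'(2)[rule_format, of "A v"]] Suc.prems(2) by simp
    done
qed

lemma smooth_const: "smooth_on S (\<lambda>x. c)" by (simp add: smooth_on_def Ck_const)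
lemma smooth_add: "smooth_on S f \<Longrightarrow> smooth_on S g \<Longrightarrow> smooth_on S (\<lambda>x. f x + g x)"
  by (simp add: smooth_on_def Ck_add)
lemma smooth_mult: "smooth_on S f \<Longrightarrow> smooth_on S g \<Longrightarrow> smooth_on S (\<lambda>x. f x * g x :: real)"
  by (simp add: smooth_on_def Ck_mult)
lemma smooth_minus: "smooth_on S f \<Longrightarrow> smooth_on S g \<Longrightarrow> smooth_on S (\<lambda>x. f x - g x :: real)"
proof -
  assume a: "smooth_on S f" "smooth_on S g"
  have "smooth_on S (\<lambda>x. f x + (-1) * g x)" by (intro smooth_add smooth_mult smooth_const a)
  then show ?thesis by simp
qed


lemma PS_Ck: "Hc c \<rho> \<Longrightarrow> Ck_on k (box0 \<rho>) (PS c)"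
proof (induction k arbitrary: c)
  case 0
  then show ?case
    by (auto intro!: continuous_at_imp_continuous_on has_derivative_continuous PS_deriv)
next
  case (Suc k)
  have IH: "Ck_on k (box0 \<rho>) (PS (sh1 c))" "Ck_on k (box0 \<rho>) (PS (sh2 c))"
    "Ck_on k (box0 \<rho>) (PS (sh3 c))" "Ck_on k (box0 \<rho>) (PS (sh4 c))"
    using Suc.IH Hc_sh1 Hc_sh2 Hc_sh3 Hc_sh4 Suc.prems by blast+
  show ?case
    apply (rule Ck_on.simps(2)[THEN iffD2], rule exI[of _ "dPS c"])
    apply (intro conjI ballI allI PS_deriv[OF Suc.prems])
     apply assumption
    unfolding dPS_def
    by (intro Ck_add Ck_mult Ck_const IH)
qed

lemma Hc_sh4_pow: "Hc c \<rho> \<Longrightarrow> Hc ((sh4 ^^ k) c) \<rho>"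
  by (induction k) (auto intro: Hc_sh4)

definition tr :: "R4 \<Rightarrow> R4 \<Rightarrow> R4" where
  "tr p q = (fst q - fst p, fst (snd q) - fst (snd p), fst (snd (snd q)) - fst (snd (snd p)), snd (snd (snd q)) - snd (snd (snd p)))"

lemma d4_local:
  assumes H: "Hc ck \<rho>" and eq: "\<And>q. tr p q \<in> box0 \<rho> \<Longrightarrow> f q = PS ck (tr p q)"
    and q: "tr p (x,y,z,t) \<in> box0 \<rho>"
  shows "((\<lambda>s. f (x,y,z,s)) has_real_derivative PS (sh4 ck) (tr p (x,y,z,t))) (at t)"
proof -
  define U where "U = {s. tr p (x,y,z,s) \<in> box0 \<rho>}"
  have "open U" unfolding U_def tr_def box0_def
    by (simp, intro open_Collect_conj open_Collect_less continuous_intros)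
  have tU: "t \<in> U" using q by (simp add: U_def)
  have dl: "((\<lambda>s. tr p (x,y,z,s)) has_derivative (\<lambda>h. (0,0,0,h))) (at t)"
    unfolding tr_def by (auto intro!: derivative_eq_intros)
  have "((\<lambda>s. PS ck (tr p (x,y,z,s))) has_derivative (\<lambda>h. dPS ck (tr p (x,y,z,t)) (0,0,0,h))) (at t)"
    using diff_chain_at[OF dl PS_deriv[OF H q]] by (simp add: o_def)
  then have "((\<lambda>s. PS ck (tr p (x,y,z,s))) has_real_derivative PS (sh4 ck) (tr p (x,y,z,t))) (at t)"
    unfolding has_field_derivative_def dPS_def by (simp add: mult.commute[of _ "PS (sh4 ck) _"])
  then show ?thesis
    by (rule has_field_derivative_transform_within_open[OF _ \<open>open U\<close> tU]) (simp add: U_def eq)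
qed

lemma d4_pow_local:
  assumes H: "Hc c \<rho>" and eq: "\<And>q. tr p q \<in> box0 \<rho> \<Longrightarrow> f q = PS c (tr p q)"
  shows "tr p q \<in> box0 \<rho> \<Longrightarrow> (d4 ^^ k) f q = PS ((sh4 ^^ k) c) (tr p q)"
proof (induction k arbitrary: q)
  case 0 then show ?case using eq by simp
next
  case (Suc k)
  obtain x y z t where qq: "q = (x,y,z,t)" by (cases q rule: prod_cases4)
  have "((\<lambda>s. (d4 ^^ k) f (x,y,z,s)) has_real_derivative PS (sh4 ((sh4 ^^ k) c)) (tr p (x,y,z,t))) (at t)"
    by (rule d4_local[OF Hc_sh4_pow[OF H]]) (use Suc qq in auto)
  moreover have "(d4 ^^ Suc k) f (x,y,z,t) = deriv (\<lambda>s. (d4 ^^ k) f (x,y,z,s)) t"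
    by (simp only: funpow.simps(2) o_apply d4_def[of "(d4 ^^ k) f"] prod.case)
  ultimately show ?case by (simp add: qq DERIV_imp_deriv)
qed

lemma d4_pow_deriv:
  assumes H: "Hc c \<rho>" and eq: "\<And>q. tr p q \<in> box0 \<rho> \<Longrightarrow> f q = PS c (tr p q)"
    and q: "tr p (x,y,z,t) \<in> box0 \<rho>"
  shows "((\<lambda>s. (d4 ^^ k) f (x,y,z,s)) has_real_derivative (d4 ^^ Suc k) f (x,y,z,t)) (at t)"
proof -
  have "((\<lambda>s. (d4 ^^ k) f (x,y,z,s)) has_real_derivative PS (sh4 ((sh4 ^^ k) c)) (tr p (x,y,z,t))) (at t)"
    by (rule d4_local[OF Hc_sh4_pow[OF H] d4_pow_local[OF H eq] q])
  moreover have "(d4 ^^ Suc k) f (x,y,z,t) = PS (sh4 ((sh4 ^^ k) c)) (tr p (x,y,z,t))"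
    using d4_pow_local[OF H eq q, of "Suc k"] by simp
  ultimately show ?thesis by simp
qed

lemma dist_tr: "dist q p \<le> \<bar>fst (tr p q)\<bar> + \<bar>fst (snd (tr p q))\<bar> + \<bar>fst (snd (snd (tr p q)))\<bar> + \<bar>snd (snd (snd (tr p q)))\<bar>"
proof -
  have "q - p = tr p q" by (simp add: tr_def prod_eq_iff)
  then have "dist q p = norm (tr p q)" by (simp add: dist_norm)
  also have "\<dots> \<le> \<bar>fst (tr p q)\<bar> + norm (snd (tr p q))"
    using norm_Pair_le[of "fst (tr p q)" "snd (tr p q)"] by simp
  also have "norm (snd (tr p q)) \<le> \<bar>fst (snd (tr p q))\<bar> + norm (snd (snd (tr p q)))"
    using norm_Pair_le[of "fst (snd (tr p q))" "snd (snd (tr p q))"] by simp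
  also have "norm (snd (snd (tr p q))) \<le> \<bar>fst (snd (snd (tr p q)))\<bar> + \<bar>snd (snd (snd (tr p q)))\<bar>"
    using norm_Pair_le[of "fst (snd (snd (tr p q)))" "snd (snd (snd (tr p q)))"] by simp
  finally show ?thesis by simp
qed

lemma box0_dist: "tr p q \<in> box0 \<rho> \<Longrightarrow> dist q p < 4 * \<rho>"
  using dist_tr[of q p] by (auto simp: box0_def)

lemma Hc_mono: "Hc c \<rho> \<Longrightarrow> \<rho>' \<le> \<rho> \<Longrightarrow> Hc c \<rho>'"
  by (auto simp: Hc_def)

lemma analytic_Hc:
  assumes r: "r > 0"
    and hs: "\<forall>q\<in>ball p r. ((\<lambda>(i,j,k,l). c i j k l * (fst q - fst p) ^ i * (fst (snd q) - fst (snd p)) ^ j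
              * (fst (snd (snd q)) - fst (snd (snd p))) ^ k
              * (snd (snd (snd q)) - snd (snd (snd p))) ^ l) has_sum f q) UNIV"
  shows "Hc c (r/4)" "\<And>q. tr p q \<in> box0 (r/4) \<Longrightarrow> f q = PS c (tr p q)"
proof -
  have tq: "(\<lambda>(i,j,k,l). c i j k l * (fst q - fst p) ^ i * (fst (snd q) - fst (snd p)) ^ j
              * (fst (snd (snd q)) - fst (snd (snd p))) ^ k
              * (snd (snd (snd q)) - snd (snd (snd p))) ^ l) = trm c (tr p q)" for q
    by (simp add: trm_def tr_def)
  have hs': "(trm c (tr p q) has_sum f q) UNIV" if "tr p q \<in> box0 (r/4)" for q
  proof -
    have "q \<in> ball p r" using box0_dist[OF that] by (simp add: dist_commute)
    then show ?thesis using hs tq by metis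
  qed
  show "f q = PS c (tr p q)" if "tr p q \<in> box0 (r/4)" for q
    using hs'[OF that] unfolding PS_def by (metis infsumI)
  show "Hc c (r/4)" unfolding Hc_def
  proof (intro allI impI)
    fix s assume s: "0 \<le> s \<and> s < r/4"
    define q where "q = (fst p + s, fst (snd p) + s, fst (snd (snd p)) + s, snd (snd (snd p)) + s)"
    have tpq: "tr p q = (s,s,s,s)" by (simp add: q_def tr_def)
    have "tr p q \<in> box0 (r/4)" using s by (simp add: tpq box0_def)
    then have "trm c (s,s,s,s) summable_on UNIV" using hs'[of q] tpq by (auto simp: summable_on_def)
    then have "(\<lambda>n. norm (trm c (s,s,s,s) n)) summable_on UNIV"
      using summable_on_iff_abs_summable_on_real[THEN iffD1] by blast
    moreover have "norm (trm c (s,s,s,s) n) = mjr c s n" for n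
      using s by (cases n rule: prod_cases4) (simp add: trm_def mjr_def abs_mult power_add)
    ultimately show "mjr c s summable_on UNIV" by simp
  qed
qed

lemma smooth_coef:
  assumes H: "Hc c \<rho>" and eq: "\<And>q. tr p q \<in> box0 \<rho> \<Longrightarrow> f q = PS c (tr p q)"
    and W: "W = {w::R3. \<bar>fst w - fst p\<bar> < \<rho> \<and> \<bar>fst (snd w) - fst (snd p)\<bar> < \<rho> \<and> \<bar>snd (snd w) - fst (snd (snd p))\<bar> < \<rho>}"
    and r: "0 < \<rho>"
  shows "smooth_on W (\<lambda>w. (d4 ^^ k) f (fst w, fst (snd w), snd (snd w), snd (snd (snd p))))"
  unfolding smooth_on_def
proof
  fix m
  define L where "L w = tr p (fst w, fst (snd w), snd (snd w), snd (snd (snd p)))" for w :: R3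
  have oW: "open W" unfolding W
    by (intro open_Collect_conj open_Collect_less continuous_intros)
  have dL: "(L has_derivative (\<lambda>h. (fst h, fst (snd h), snd (snd h), 0))) (at w)" for w
    unfolding L_def tr_def by (auto intro!: derivative_eq_intros)
  have LW: "L w \<in> box0 \<rho>" if "w \<in> W" for w using that r by (auto simp: W L_def tr_def box0_def)
  have "Ck_on m W (\<lambda>w. PS ((sh4 ^^ k) c) (L w))"
    by (rule Ck_compose_affine[OF dL PS_Ck[OF Hc_sh4_pow[OF H]] LW])
  then show "Ck_on m W (\<lambda>w. (d4 ^^ k) f (fst w, fst (snd w), snd (snd w), snd (snd (snd p))))"
    by (rule Ck_cong[OF oW, rotated]) (use d4_pow_local[OF H eq] LW in \<open>auto simp: L_def\<close>)
qed

theorem proposition4p1: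
  fixes \<Omega> :: "R4 set" and g h :: "R4 \<Rightarrow> real"
  assumes "open \<Omega>" and "connected \<Omega>"
    and "real_analytic_on4 \<Omega> g" and "real_analytic_on4 \<Omega> h"
    and "\<forall>p\<in>\<Omega>. d4 g p \<noteq> 0"
    and "diffeo_onto_image \<Omega> (\<lambda>(x,y,z,l). (x,y,z,g (x,y,z,l)))"
    and S0: "\<forall>p\<in>\<Omega>. 2 * d4 g p * (d4 ^^ 3) g p - 3 * ((d4 ^^ 2) g p)\<^sup>2 = 0"
    and T0: "\<forall>p\<in>\<Omega>. 2 * d4 g p * (d4 ^^ 3) h p - 3 * (d4 ^^ 2) g p * (d4 ^^ 2) h p = 0"
    and "(x0, y0, z0, l0) \<in> \<Omega>"
  shows "\<exists>(W :: R3 set) (I :: real set) (a0 :: R3 \<Rightarrow> real) a1 a2 b0 b1 c0 c1.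
           open W \<and> open I \<and> is_interval I \<and> (x0, y0, z0) \<in> W \<and> l0 \<in> I
         \<and> {(x, y, z, l) | x y z l. (x, y, z) \<in> W \<and> l \<in> I} \<subseteq> \<Omega>
         \<and> smooth_on W a0 \<and> smooth_on W a1 \<and> smooth_on W a2 \<and> smooth_on W b0
         \<and> smooth_on W b1 \<and> smooth_on W c0 \<and> smooth_on W c1
         \<and> (\<forall>w\<in>W. \<forall>l\<in>I. c0 w + c1 w * l \<noteq> 0)
         \<and> (\<forall>w\<in>W. c1 w * b0 w - b1 w * c0 w \<noteq> 0)
         \<and> (\<forall>x y z l. (x, y, z) \<in> W \<longrightarrow> l \<in> I \<longrightarrow>
              (\<forall>xd zd :: real.
                 zd = h (x, y, z, l) + g (x, y, z, l) * xd \<longleftrightarrow>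
                 l * (b1 (x,y,z) * xd + a2 (x,y,z) * l - c1 (x,y,z) * zd)
                 + (b0 (x,y,z) * xd + a1 (x,y,z) * l - c0 (x,y,z) * zd) + a0 (x,y,z) = 0))"
proof -
  define p0 where "p0 = (x0, y0, z0, l0)"
  have p0\<Omega>: "p0 \<in> \<Omega>" using assms(9) by (simp add: p0_def)
  obtain rg cg where rg: "rg > 0" and hsg: "\<forall>q\<in>ball p0 rg. ((\<lambda>(i,j,k,l). cg i j k l * (fst q - fst p0) ^ i * (fst (snd q) - fst (snd p0)) ^ j
              * (fst (snd (snd q)) - fst (snd (snd p0))) ^ k
              * (snd (snd (snd q)) - snd (snd (snd p0))) ^ l) has_sum g q) UNIV"
    using assms(3) p0\<Omega> unfolding real_analytic_on4_def by blast
  obtain rh ch where rh: "rh > 0" and hsh: "\<forall>q\<in>ball p0 rh. ((\<lambda>(i,j,k,l). ch i j k l * (fst q - fst p0) ^ i * (fst (snd q) - fst (snd p0)) ^ j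
              * (fst (snd (snd q)) - fst (snd (snd p0))) ^ k
              * (snd (snd (snd q)) - snd (snd (snd p0))) ^ l) has_sum h q) UNIV"
    using assms(4) p0\<Omega> unfolding real_analytic_on4_def by blast
  obtain e where e: "e > 0" "ball p0 e \<subseteq> \<Omega>" using assms(1) p0\<Omega> open_contains_ball by blast
  define \<rho> where "\<rho> = min e (min rg rh) / 4"
  have \<rho>: "0 < \<rho>" "\<rho> \<le> rg / 4" "\<rho> \<le> rh / 4" "4 * \<rho> \<le> e" using e rg rh by (auto simp: \<rho>_def)
  have Hg: "Hc cg \<rho>" using analytic_Hc(1)[OF rg hsg] Hc_mono \<rho> by blast
  have Hh: "Hc ch \<rho>" using analytic_Hc(1)[OF rh hsh] Hc_mono \<rho> by blast
  have box_mono: "box0 \<rho> \<subseteq> box0 r" if "\<rho> \<le> r" for r using that by (auto simp: box0_def)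
  have eqg: "g q = PS cg (tr p0 q)" if "tr p0 q \<in> box0 \<rho>" for q
    using analytic_Hc(2)[OF rg hsg] box_mono[OF \<rho>(2)] that by blast
  have eqh: "h q = PS ch (tr p0 q)" if "tr p0 q \<in> box0 \<rho>" for q
    using analytic_Hc(2)[OF rh hsh] box_mono[OF \<rho>(3)] that by blast
  have in\<Omega>: "q \<in> \<Omega>" if "tr p0 q \<in> box0 \<rho>" for q
    using box0_dist[OF that] \<rho>(4) e(2) by (auto simp: dist_commute)
  define W where "W = {w::R3. \<bar>fst w - fst p0\<bar> < \<rho> \<and> \<bar>fst (snd w) - fst (snd p0)\<bar> < \<rho> \<and> \<bar>snd (snd w) - fst (snd (snd p0))\<bar> < \<rho>}"
  define I where "I = {l0 - \<rho> <..< l0 + \<rho>}"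
  have trWI: "tr p0 (x,y,z,l) \<in> box0 \<rho>" if "(x,y,z) \<in> W" "l \<in> I" for x y z l
    using that by (auto simp: W_def I_def tr_def box0_def p0_def abs_less_iff)
  have oW: "open W" unfolding W_def
    by (intro open_Collect_conj open_Collect_less continuous_intros)
  have oI: "open I" "is_interval I" by (auto simp: I_def is_interval_1)
  have wW: "(x0,y0,z0) \<in> W" using \<rho> by (simp add: W_def p0_def)
  have lI: "l0 \<in> I" using \<rho> by (simp add: I_def)
  have sub: "{(x, y, z, l) | x y z l. (x, y, z) \<in> W \<and> l \<in> I} \<subseteq> \<Omega>"
    using trWI in\<Omega> by blast
  define G where "G k w = (d4 ^^ k) g (fst w, fst (snd w), snd (snd w), l0)" for k w
  define E where "E k w = (d4 ^^ k) h (fst w, fst (snd w), snd (snd w), l0)" for k w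
  have smG: "smooth_on W (G k)" for k
    unfolding G_def using smooth_coef[OF Hg eqg W_def \<rho>(1), of k] by (simp add: p0_def)
  have smE: "smooth_on W (E k)" for k
    unfolding E_def using smooth_coef[OF Hh eqh W_def \<rho>(1), of k] by (simp add: p0_def)
  define c1 where "c1 w = (-1) * G 2 w" for w
  define c0 where "c0 w = 2 * G 1 w + G 2 w * l0" for w
  define b1 where "b1 w = 2 * (G 1 w * G 1 w) - G 0 w * G 2 w" for w
  define b0 where "b0 w = 2 * G 0 w * G 1 w - (2 * (G 1 w * G 1 w) - G 0 w * G 2 w) * l0" for w
  define a2 where "a2 w = E 2 w * G 1 w - E 1 w * G 2 w" for w
  define a1 where "a1 w = (2 * E 1 w * G 1 w - E 0 w * G 2 w) - 2 * (E 2 w * G 1 w - E 1 w * G 2 w) * l0" for w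
  define a0 where "a0 w = 2 * E 0 w * G 1 w - (2 * E 1 w * G 1 w - E 0 w * G 2 w) * l0 + (E 2 w * G 1 w - E 1 w * G 2 w) * (l0 * l0)" for w
  have sm: "smooth_on W a0" "smooth_on W a1" "smooth_on W a2" "smooth_on W b0"
    "smooth_on W b1" "smooth_on W c0" "smooth_on W c1"
    unfolding a0_def a1_def a2_def b0_def b1_def c0_def c1_def
    by (intro smooth_add smooth_minus smooth_mult smooth_const smG smE)+
  have core_w: "2 * G 1 (x,y,z) - G 2 (x,y,z) * (l - l0) \<noteq> 0
     \<and> g (x,y,z,l) * (2 * G 1 (x,y,z) - G 2 (x,y,z) * (l - l0)) = 2 * G 0 (x,y,z) * G 1 (x,y,z) + (2 * (G 1 (x,y,z))^2 - G 0 (x,y,z) * G 2 (x,y,z)) * (l - l0)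
     \<and> h (x,y,z,l) * (2 * G 1 (x,y,z) - G 2 (x,y,z) * (l - l0)) = 2 * E 0 (x,y,z) * G 1 (x,y,z) + (2 * E 1 (x,y,z) * G 1 (x,y,z) - E 0 (x,y,z) * G 2 (x,y,z)) * (l - l0)
        + (E 2 (x,y,z) * G 1 (x,y,z) - E 1 (x,y,z) * G 2 (x,y,z)) * (l - l0)^2"
    if w: "(x,y,z) \<in> W" and l: "l \<in> I" for x y z l
  proof -
    have tI: "tr p0 (x,y,z,t) \<in> box0 \<rho>" if "t \<in> I" for t using trWI[OF w that] .
    have dg: "((\<lambda>s. (d4 ^^ k) g (x,y,z,s)) has_real_derivative (d4 ^^ Suc k) g (x,y,z,t)) (at t)"
      if "t \<in> I" for t k using d4_pow_deriv[OF Hg eqg tI[OF that]] .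
    have dh: "((\<lambda>s. (d4 ^^ k) h (x,y,z,s)) has_real_derivative (d4 ^^ Suc k) h (x,y,z,t)) (at t)"
      if "t \<in> I" for t k using d4_pow_deriv[OF Hh eqh tI[OF that]] .
    have c: "2 * (d4 ^^ Suc 0) g (x,y,z,l0) - (d4 ^^ Suc (Suc 0)) g (x,y,z,l0) * (l - l0) \<noteq> 0
     \<and> (d4 ^^ 0) g (x,y,z,l) * (2 * (d4 ^^ Suc 0) g (x,y,z,l0) - (d4 ^^ Suc (Suc 0)) g (x,y,z,l0) * (l - l0)) = 2 * (d4 ^^ 0) g (x,y,z,l0) * (d4 ^^ Suc 0) g (x,y,z,l0) + (2 * ((d4 ^^ Suc 0) g (x,y,z,l0))^2 - (d4 ^^ 0) g (x,y,z,l0) * (d4 ^^ Suc (Suc 0)) g (x,y,z,l0)) * (l - l0)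
     \<and> (d4 ^^ 0) h (x,y,z,l) * (2 * (d4 ^^ Suc 0) g (x,y,z,l0) - (d4 ^^ Suc (Suc 0)) g (x,y,z,l0) * (l - l0)) = 2 * (d4 ^^ 0) h (x,y,z,l0) * (d4 ^^ Suc 0) g (x,y,z,l0) + (2 * (d4 ^^ Suc 0) h (x,y,z,l0) * (d4 ^^ Suc 0) g (x,y,z,l0) - (d4 ^^ 0) h (x,y,z,l0) * (d4 ^^ Suc (Suc 0)) g (x,y,z,l0)) * (l - l0)
        + ((d4 ^^ Suc (Suc 0)) h (x,y,z,l0) * (d4 ^^ Suc 0) g (x,y,z,l0) - (d4 ^^ Suc 0) h (x,y,z,l0) * (d4 ^^ Suc (Suc 0)) g (x,y,z,l0)) * (l - l0)^2"
    proof (intro conjI)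
      have nz: "(d4 ^^ Suc 0) g (x,y,z,t) \<noteq> 0" if "t \<in> I" for t
        using assms(5) in\<Omega>[OF tI[OF that]] by simp
      have SS: "2 * (d4 ^^ Suc 0) g (x,y,z,t) * (d4 ^^ Suc (Suc (Suc 0))) g (x,y,z,t) - 3 * ((d4 ^^ Suc (Suc 0)) g (x,y,z,t))^2 = 0"
        if "t \<in> I" for t
        using S0 in\<Omega>[OF tI[OF that]] by (simp add: numeral_3_eq_3 numeral_2_eq_2)
      have TT: "2 * (d4 ^^ Suc 0) g (x,y,z,t) * (d4 ^^ Suc (Suc (Suc 0))) h (x,y,z,t) - 3 * (d4 ^^ Suc (Suc 0)) g (x,y,z,t) * (d4 ^^ Suc (Suc 0)) h (x,y,z,t) = 0"
        if "t \<in> I" for t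
        using T0 in\<Omega>[OF tI[OF that]] by (simp add: numeral_3_eq_3 numeral_2_eq_2)
      have d0: "((\<lambda>t. (d4 ^^ 0) g (x,y,z,t)) has_real_derivative (d4 ^^ Suc 0) g (x,y,z,t)) (at t)" if "t \<in> I" for t
        using dg[OF that] .
      have d1: "((\<lambda>t. (d4 ^^ Suc 0) g (x,y,z,t)) has_real_derivative (d4 ^^ Suc (Suc 0)) g (x,y,z,t)) (at t)" if "t \<in> I" for t
        using dg[OF that] .
      have d2: "((\<lambda>t. (d4 ^^ Suc (Suc 0)) g (x,y,z,t)) has_real_derivative (d4 ^^ Suc (Suc (Suc 0))) g (x,y,z,t)) (at t)" if "t \<in> I" for t
        using dg[OF that] .
      have e0: "((\<lambda>t. (d4 ^^ 0) h (x,y,z,t)) has_real_derivative (d4 ^^ Suc 0) h (x,y,z,t)) (at t)" if "t \<in> I" for t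
        using dh[OF that] .
      have e1: "((\<lambda>t. (d4 ^^ Suc 0) h (x,y,z,t)) has_real_derivative (d4 ^^ Suc (Suc 0)) h (x,y,z,t)) (at t)" if "t \<in> I" for t
        using dh[OF that] .
      have e2: "((\<lambda>t. (d4 ^^ Suc (Suc 0)) h (x,y,z,t)) has_real_derivative (d4 ^^ Suc (Suc (Suc 0))) h (x,y,z,t)) (at t)" if "t \<in> I" for t
        using dh[OF that] .
      note cr = core[OF oI(2) lI d0 d1 d2 e0 e1 e2 nz SS TT l]
      show "2 * (d4 ^^ Suc 0) g (x,y,z,l0) - (d4 ^^ Suc (Suc 0)) g (x,y,z,l0) * (l - l0) \<noteq> 0"
        using cr(1) by blast
      show "(d4 ^^ 0) g (x,y,z,l) * (2 * (d4 ^^ Suc 0) g (x,y,z,l0) - (d4 ^^ Suc (Suc 0)) g (x,y,z,l0) * (l - l0)) = 2 * (d4 ^^ 0) g (x,y,z,l0) * (d4 ^^ Suc 0) g (x,y,z,l0) + (2 * ((d4 ^^ Suc 0) g (x,y,z,l0))^2 - (d4 ^^ 0) g (x,y,z,l0) * (d4 ^^ Suc (Suc 0)) g (x,y,z,l0)) * (l - l0)"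
        using cr(2) by blast
      show "(d4 ^^ 0) h (x,y,z,l) * (2 * (d4 ^^ Suc 0) g (x,y,z,l0) - (d4 ^^ Suc (Suc 0)) g (x,y,z,l0) * (l - l0)) = 2 * (d4 ^^ 0) h (x,y,z,l0) * (d4 ^^ Suc 0) g (x,y,z,l0) + (2 * (d4 ^^ Suc 0) h (x,y,z,l0) * (d4 ^^ Suc 0) g (x,y,z,l0) - (d4 ^^ 0) h (x,y,z,l0) * (d4 ^^ Suc (Suc 0)) g (x,y,z,l0)) * (l - l0)
        + ((d4 ^^ Suc (Suc 0)) h (x,y,z,l0) * (d4 ^^ Suc 0) g (x,y,z,l0) - (d4 ^^ Suc 0) h (x,y,z,l0) * (d4 ^^ Suc (Suc 0)) g (x,y,z,l0)) * (l - l0)^2"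
        using cr(3) by blast
    qed
    have GG: "G 0 (x,y,z) = (d4 ^^ 0) g (x,y,z,l0)" "G 1 (x,y,z) = (d4 ^^ Suc 0) g (x,y,z,l0)"
      "G 2 (x,y,z) = (d4 ^^ Suc (Suc 0)) g (x,y,z,l0)"
      "E 0 (x,y,z) = (d4 ^^ 0) h (x,y,z,l0)" "E 1 (x,y,z) = (d4 ^^ Suc 0) h (x,y,z,l0)"
      "E 2 (x,y,z) = (d4 ^^ Suc (Suc 0)) h (x,y,z,l0)"
      by (simp_all add: G_def E_def numeral_2_eq_2)
    have "(d4 ^^ 0) g (x,y,z,l) = g (x,y,z,l)" "(d4 ^^ 0) h (x,y,z,l) = h (x,y,z,l)" by simp_all
    then show ?thesis using c unfolding GG by simp
  qed
  show ?thesis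
  proof (intro exI conjI)
    show "open W" "open I" "is_interval I" "(x0, y0, z0) \<in> W" "l0 \<in> I" by (fact oW oI wW lI)+
    show "{(x, y, z, l) | x y z l. (x, y, z) \<in> W \<and> l \<in> I} \<subseteq> \<Omega>" by (fact sub)
    show "smooth_on W a0" "smooth_on W a1" "smooth_on W a2" "smooth_on W b0"
      "smooth_on W b1" "smooth_on W c0" "smooth_on W c1" by (fact sm)+
    show "\<forall>w\<in>W. \<forall>l\<in>I. c0 w + c1 w * l \<noteq> 0"
    proof (intro ballI)
      fix w l assume w: "w \<in> W" and l: "l \<in> I"
      obtain x y z where xyz: "w = (x,y,z)" by (cases w rule: prod_cases3)
      have "c0 w + c1 w * l = 2 * G 1 (x,y,z) - G 2 (x,y,z) * (l - l0)"
        by (simp add: xyz c0_def c1_def algebra_simps)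
      then show "c0 w + c1 w * l \<noteq> 0" using core_w[of x y z l] w l xyz by simp
    qed
    show "\<forall>w\<in>W. c1 w * b0 w - b1 w * c0 w \<noteq> 0"
    proof (intro ballI)
      fix w assume w: "w \<in> W"
      obtain x y z where xyz: "w = (x,y,z)" by (cases w rule: prod_cases3)
      have "tr p0 (x,y,z,l0) \<in> box0 \<rho>" using trWI[OF _ lI] w xyz by simp
      then have "G 1 w \<noteq> 0" using assms(5) in\<Omega> by (simp add: G_def xyz)
      moreover have "c1 w * b0 w - b1 w * c0 w = -4 * (G 1 w)^3"
        by (simp add: c1_def b0_def b1_def c0_def algebra_simps power3_eq_cube)
      ultimately show "c1 w * b0 w - b1 w * c0 w \<noteq> 0" by simp
    qed
    show "\<forall>x y z l. (x, y, z) \<in> W \<longrightarrow> l \<in> I \<longrightarrow>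
              (\<forall>xd zd :: real.
                 zd = h (x, y, z, l) + g (x, y, z, l) * xd \<longleftrightarrow>
                 l * (b1 (x,y,z) * xd + a2 (x,y,z) * l - c1 (x,y,z) * zd)
                 + (b0 (x,y,z) * xd + a1 (x,y,z) * l - c0 (x,y,z) * zd) + a0 (x,y,z) = 0)"
    proof (intro allI impI)
      fix x y z l xd zd :: real assume w: "(x,y,z) \<in> W" and l: "l \<in> I"
      define D where "D = 2 * G 1 (x,y,z) - G 2 (x,y,z) * (l - l0)"
      note cw = core_w[OF w l, folded D_def]
      have "l * (b1 (x,y,z) * xd + a2 (x,y,z) * l - c1 (x,y,z) * zd)
                 + (b0 (x,y,z) * xd + a1 (x,y,z) * l - c0 (x,y,z) * zd) + a0 (x,y,z)
          = xd * (2 * G 0 (x,y,z) * G 1 (x,y,z) + (2 * (G 1 (x,y,z))^2 - G 0 (x,y,z) * G 2 (x,y,z)) * (l - l0))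
            + (2 * E 0 (x,y,z) * G 1 (x,y,z) + (2 * E 1 (x,y,z) * G 1 (x,y,z) - E 0 (x,y,z) * G 2 (x,y,z)) * (l - l0)
        + (E 2 (x,y,z) * G 1 (x,y,z) - E 1 (x,y,z) * G 2 (x,y,z)) * (l - l0)^2) - zd * D"
        by (simp add: D_def a0_def a1_def a2_def b0_def b1_def c0_def c1_def algebra_simps power2_eq_square)
      also have "\<dots> = xd * (g (x,y,z,l) * D) + h (x,y,z,l) * D - zd * D"
        using cw by presburger
      also have "\<dots> = D * (h (x,y,z,l) + g (x,y,z,l) * xd - zd)"
        by (simp add: algebra_simps)
      finally have eq: "l * (b1 (x,y,z) * xd + a2 (x,y,z) * l - c1 (x,y,z) * zd)
                 + (b0 (x,y,z) * xd + a1 (x,y,z) * l - c0 (x,y,z) * zd) + a0 (x,y,z)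
          = D * (h (x,y,z,l) + g (x,y,z,l) * xd - zd)" .
      show "zd = h (x, y, z, l) + g (x, y, z, l) * xd \<longleftrightarrow>
                 l * (b1 (x,y,z) * xd + a2 (x,y,z) * l - c1 (x,y,z) * zd)
                 + (b0 (x,y,z) * xd + a1 (x,y,z) * l - c0 (x,y,z) * zd) + a0 (x,y,z) = 0"
        unfolding eq using cw by auto
    qed
  qed
qed

end
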